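(* Let $L>0$ and let $\alpha,\beta:\mathbb{R}\to\mathbb{R}^2$ be smooth $L$-periodic maps with $\alpha'$ nowhere zero, $\langle\beta,\alpha'\rangle = 0$ and $|\alpha'|^2+|\beta|^2=1$. Define \[ \gamma(t,s) = \tfrac12\big(\alpha(s+t)+\alpha(s-t)\big) + \tfrac12\int_{s-t}^{s+t}\beta(\xi)\,d\xi, \] $a = \alpha'+\beta$, $b = \alpha'-\beta$, and smooth functions $\zeta,\eta$ by $a' = \zeta\, a^\perp$, $b' = \eta\, b^\perp$. Suppose that $(t_0,s_0)$ satisfies $\gamma_{,s}(t_0,s_0) = 0$, i.e. $a(s_0+t_0)+b(s_0-t_0) = 0$, and that \[ \zeta(s_0+t_0) \neq \eta(s_0-t_0). \] Then the unit tangent map $U(t_0,\cdot) = \gamma_{,s}(t_0,\cdot)/|\gamma_{,s}(t_0,\cdot)|$ of the curve $s\mapsto\gamma(t_0,s)$ is discontinuous at $s_0$; more specifically, it reverses direction across $s_0$: the one-sided limits $\lim_{s\to s_0^\pm}U(t_0,s)$ exist and are opposite unit vectors.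
   Context: For $v=(v_1,v_2)\in\mathbb{R}^2$, $v^\perp = (-v_2,v_1)$. Since $|a|=|b|=1$, the functions $\zeta,\eta$ are well defined. Note $2\gamma_{,s}(t,s) = a(s+t)+b(s-t)$, and $U(t,s)$ is defined wherever $\gamma_{,s}(t,s)\ne 0$. *)

theory Defs
  imports "HOL-Analysis.Analysis"
begin

text \<open>Vectors in the plane are represented as pairs of reals, with the
product inner product and Euclidean norm.\<close>

definition perp :: "real \<times> real \<Rightarrow> real \<times> real" where
  "perp v = (- snd v, fst v)"

definition smooth :: "(real \<Rightarrow> 'a::real_normed_vector) \<Rightarrow> bool" where
  "smooth f \<longleftrightarrow> (\<exists>D. D 0 = f \<and> (\<forall>n x. (D n has_vector_derivative D (Suc n) x) (at x)))"

definition oint :: "(real \<Rightarrow> 'a::euclidean_space) \<Rightarrow> real \<Rightarrow> real \<Rightarrow> 'a" where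
  "oint f x y = (if x \<le> y then integral {x..y} f else - integral {y..x} f)"

definition gam :: "(real \<Rightarrow> real \<times> real) \<Rightarrow> (real \<Rightarrow> real \<times> real) \<Rightarrow> real \<Rightarrow> real \<Rightarrow> real \<times> real" where
  "gam \<alpha> \<beta> t s = (1/2) *\<^sub>R (\<alpha> (s + t) + \<alpha> (s - t)) + (1/2) *\<^sub>R oint \<beta> (s - t) (s + t)"

definition unit_tangent :: "(real \<Rightarrow> real \<times> real) \<Rightarrow> (real \<Rightarrow> real \<times> real) \<Rightarrow> real \<Rightarrow> real \<Rightarrow> real \<times> real" where
  "unit_tangent \<alpha> \<beta> t s =
     (let g = vector_derivative (\<lambda>\<sigma>. gam \<alpha> \<beta> t \<sigma>) (at s) in (1 / norm g) *\<^sub>R g)"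

end

theory Submission imports Defs begin

lemma smooth_vd:
  assumes "smooth f"
  shows "(f has_vector_derivative vector_derivative f (at x)) (at x)"
    and "((\<lambda>y. vector_derivative f (at y)) has_vector_derivative
            vector_derivative (\<lambda>y. vector_derivative f (at y)) (at x)) (at x)"
proof -
  obtain D where D0: "D 0 = f" and D: "\<And>n x. (D n has_vector_derivative D (Suc n) x) (at x)"
    using assms unfolding smooth_def by blast
  have e: "vector_derivative f (at y) = D 1 y" for y
    using D[of 0 y] D0 by (simp add: vector_derivative_at)
  show "(f has_vector_derivative vector_derivative f (at x)) (at x)"
    using D[of 0 x] D0 e by simp
  have "(\<lambda>y. vector_derivative f (at y)) = D 1" using e by auto
  then show "((\<lambda>y. vector_derivative f (at y)) has_vector_derivative
            vector_derivative (\<lambda>y. vector_derivative f (at y)) (at x)) (at x)"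
    using D[of 1 x] by (simp add: vector_derivative_at)
qed

lemma smooth_cont: "smooth f \<Longrightarrow> continuous_on UNIV f"
  by (meson continuous_at_imp_continuous_on has_vector_derivative_continuous smooth_vd(1))

lemma oint_base:
  fixes f :: "real \<Rightarrow> 'a::euclidean_space"
  assumes c: "continuous_on UNIV f" and "m \<le> x" "m \<le> y"
  shows "oint f x y = integral {m..y} f - integral {m..x} f"
proof (cases "x \<le> y")
  case True
  have "integral {m..x} f + integral {x..y} f = integral {m..y} f"
    using assms True by (intro Henstock_Kurzweil_Integration.integral_combine integrable_continuous_real continuous_on_subset[OF c]) auto
  then show ?thesis using True unfolding oint_def by (simp add: algebra_simps)
next
  case False
  have "integral {m..y} f + integral {y..x} f = integral {m..x} f"
    using assms False by (intro Henstock_Kurzweil_Integration.integral_combine integrable_continuous_real continuous_on_subset[OF c]) auto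
  then show ?thesis using False unfolding oint_def by (simp add: algebra_simps)
qed

lemma oint_split:
  fixes f :: "real \<Rightarrow> 'a::euclidean_space"
  assumes c: "continuous_on UNIV f"
  shows "oint f x y = oint f c y - oint f c x"
proof -
  define m where "m = min (min x y) c"
  have m: "m \<le> x" "m \<le> y" "m \<le> c" by (auto simp: m_def)
  show ?thesis
    unfolding oint_base[OF assms m(1) m(2)] oint_base[OF assms m(3) m(2)] oint_base[OF assms m(3) m(1)]
    by (simp add: algebra_simps)
qed

lemma oint_deriv:
  fixes f :: "real \<Rightarrow> 'a::euclidean_space"
  assumes c: "continuous_on UNIV f"
  shows "((\<lambda>y. oint f c y) has_vector_derivative f y) (at y)"
proof -
  define m where "m = min c y - 1"
  have my: "m < y" "y < y + 1" by (auto simp: m_def)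
  have cm: "continuous_on {m..y+1} f" by (rule continuous_on_subset[OF c]) simp
  have "((\<lambda>u. integral {m..u} f) has_vector_derivative f y) (at y within {m..y+1})"
    using integral_has_vector_derivative[OF cm, of y] my by simp
  moreover have "at y within {m..y+1} = at y"
    by (rule at_within_interior) (use my in simp)
  ultimately have d1: "((\<lambda>u. integral {m..u} f) has_vector_derivative f y) (at y)"
    by simp
  have d2: "((\<lambda>u. integral {m..u} f - integral {m..c} f) has_vector_derivative f y - 0) (at y)"
    by (rule has_vector_derivative_diff[OF d1 has_vector_derivative_const])
  show ?thesis
  proof (rule has_vector_derivative_transform_within_open[OF d2[simplified]])
    show "open {m<..}" by simp
    show "y \<in> {m<..}" using my by simp
    fix z :: real assume "z \<in> {m<..}"
    then have "m \<le> c" "m \<le> z" by (auto simp: m_def)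
    then show "integral {m..z} f - integral {m..c} f = oint f c z"
      using oint_base[OF c, of m c z] by simp
  qed
qed


lemma shift_deriv:
  assumes "(f has_vector_derivative f') (at (s + c))"
  shows "((\<lambda>s. f (s + c)) has_vector_derivative f') (at s)"
proof -
  have "((\<lambda>s. s + c) has_vector_derivative 1) (at s)" by (auto intro!: derivative_eq_intros)
  from vector_diff_chain_at[OF this, of f f'] assms show ?thesis by (simp add: o_def)
qed

lemma shift_deriv':
  assumes "(f has_vector_derivative f') (at (s - c))"
  shows "((\<lambda>s. f (s - c)) has_vector_derivative f') (at s)"
  using shift_deriv[of f f' s "-c"] assms by simp

lemma hvd_scale:
  "(g has_vector_derivative g') (at x) \<Longrightarrow> ((\<lambda>x. c *\<^sub>R g x) has_vector_derivative c *\<^sub>R g') (at x)"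
  using has_vector_derivative_scaleR[OF DERIV_const[of c], of g g'] by simp

lemma normalize_scale:
  fixes g :: "'a::real_normed_vector"
  assumes "c \<noteq> 0"
  shows "(1 / norm (c *\<^sub>R g)) *\<^sub>R (c *\<^sub>R g) = sgn c *\<^sub>R ((1 / norm g) *\<^sub>R g)"
proof (cases "g = 0")
  case True then show ?thesis by simp
next
  case False
  then have n: "norm g \<noteq> 0" by simp
  have "(1 / norm (c *\<^sub>R g)) *\<^sub>R (c *\<^sub>R g) = ((1 / (\<bar>c\<bar> * norm g)) * c) *\<^sub>R g"
    by simp
  also have "(1 / (\<bar>c\<bar> * norm g)) * c = sgn c * (1 / norm g)"
    unfolding real_sgn_eq by (simp add: divide_inverse inverse_mult_distrib mult_ac)
  finally show ?thesis by (simp only: scaleR_scaleR)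
qed

lemma perp_minus: "perp (- x) = - perp x" by (simp add: perp_def)
lemma perp_zero: "perp x = 0 \<longleftrightarrow> x = 0" by (auto simp: perp_def prod_eq_iff)

theorem lemma2p4:
  fixes L :: real and \<alpha> \<beta> :: "real \<Rightarrow> real \<times> real"
    and \<zeta> \<eta> :: "real \<Rightarrow> real" and t0 s0 :: real
  assumes L_pos: "L > 0"
    and smooth_\<alpha>: "smooth \<alpha>" and smooth_\<beta>: "smooth \<beta>"
    and per_\<alpha>: "\<forall>x. \<alpha> (x + L) = \<alpha> x" and per_\<beta>: "\<forall>x. \<beta> (x + L) = \<beta> x"
    and nz: "\<forall>x. vector_derivative \<alpha> (at x) \<noteq> 0"
    and orth: "\<forall>x. inner (\<beta> x) (vector_derivative \<alpha> (at x)) = 0"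
    and unit: "\<forall>x. (norm (vector_derivative \<alpha> (at x)))\<^sup>2 + (norm (\<beta> x))\<^sup>2 = 1"
    and \<zeta>_def: "\<forall>x. vector_derivative (\<lambda>y. vector_derivative \<alpha> (at y) + \<beta> y) (at x)
                    = \<zeta> x *\<^sub>R perp (vector_derivative \<alpha> (at x) + \<beta> x)"
    and \<eta>_def: "\<forall>x. vector_derivative (\<lambda>y. vector_derivative \<alpha> (at y) - \<beta> y) (at x)
                    = \<eta> x *\<^sub>R perp (vector_derivative \<alpha> (at x) - \<beta> x)"
    and crit: "vector_derivative (\<lambda>s. gam \<alpha> \<beta> t0 s) (at s0) = 0"
    and neq: "\<zeta> (s0 + t0) \<noteq> \<eta> (s0 - t0)"
  shows "\<exists>u. norm u = 1 \<and> (unit_tangent \<alpha> \<beta> t0 \<longlongrightarrow> u) (at_right s0)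
             \<and> (unit_tangent \<alpha> \<beta> t0 \<longlongrightarrow> - u) (at_left s0)"
proof -
  define A where "A = (\<lambda>y. vector_derivative \<alpha> (at y))"
  define a where "a = (\<lambda>y. vector_derivative \<alpha> (at y) + \<beta> y)"
  define b where "b = (\<lambda>y. vector_derivative \<alpha> (at y) - \<beta> y)"
  define G where "G = (\<lambda>s. a (s + t0) + b (s - t0))"
  have cb: "continuous_on UNIV \<beta>" by (rule smooth_cont[OF smooth_\<beta>])
  have dal: "(\<alpha> has_vector_derivative A x) (at x)" for x
    unfolding A_def by (rule smooth_vd(1)[OF smooth_\<alpha>])
  have dA: "(A has_vector_derivative vector_derivative A (at x)) (at x)" for x
    unfolding A_def by (rule smooth_vd(2)[OF smooth_\<alpha>])
  have db: "(\<beta> has_vector_derivative vector_derivative \<beta> (at x)) (at x)" for x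
    by (rule smooth_vd(1)[OF smooth_\<beta>])
  have da: "(a has_vector_derivative \<zeta> x *\<^sub>R perp (a x)) (at x)" for x
  proof -
    have "(a has_vector_derivative (vector_derivative A (at x) + vector_derivative \<beta> (at x))) (at x)"
      using has_vector_derivative_add[OF dA[of x] db[of x]] by (simp add: a_def A_def)
    moreover then have "vector_derivative a (at x) = vector_derivative A (at x) + vector_derivative \<beta> (at x)"
      by (rule vector_derivative_at)
    ultimately show ?thesis using \<zeta>_def unfolding a_def by simp
  qed
  have dbb: "(b has_vector_derivative \<eta> x *\<^sub>R perp (b x)) (at x)" for x
  proof -
    have "(b has_vector_derivative (vector_derivative A (at x) - vector_derivative \<beta> (at x))) (at x)"
      using has_vector_derivative_diff[OF dA[of x] db[of x]] by (simp add: b_def A_def)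
    moreover then have "vector_derivative b (at x) = vector_derivative A (at x) - vector_derivative \<beta> (at x)"
      by (rule vector_derivative_at)
    ultimately show ?thesis using \<eta>_def unfolding b_def by simp
  qed
  have gam_eq: "gam \<alpha> \<beta> t0 = (\<lambda>s. (1/2) *\<^sub>R (\<alpha> (s + t0) + \<alpha> (s - t0))
        + (1/2) *\<^sub>R (oint \<beta> 0 (s + t0) - oint \<beta> 0 (s - t0)))"
  proof (rule ext)
    fix s show "gam \<alpha> \<beta> t0 s = (1/2) *\<^sub>R (\<alpha> (s + t0) + \<alpha> (s - t0))
        + (1/2) *\<^sub>R (oint \<beta> 0 (s + t0) - oint \<beta> 0 (s - t0))"
      unfolding gam_def using oint_split[OF cb, of "s - t0" "s + t0" 0] by simp
  qed
  have dgam: "(gam \<alpha> \<beta> t0 has_vector_derivative (1/2) *\<^sub>R G s) (at s)" for s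
  proof -
    have "((\<lambda>s. (1/2) *\<^sub>R (\<alpha> (s + t0) + \<alpha> (s - t0))
        + (1/2) *\<^sub>R (oint \<beta> 0 (s + t0) - oint \<beta> 0 (s - t0))) has_vector_derivative
        (1/2) *\<^sub>R (A (s + t0) + A (s - t0)) + (1/2) *\<^sub>R (\<beta> (s + t0) - \<beta> (s - t0))) (at s)"
      by (rule has_vector_derivative_add[OF hvd_scale[OF has_vector_derivative_add[OF shift_deriv[OF dal] shift_deriv'[OF dal]]]
          hvd_scale[OF has_vector_derivative_diff[OF shift_deriv[OF oint_deriv[OF cb]] shift_deriv'[OF oint_deriv[OF cb]]]]])
    moreover have "(1/2) *\<^sub>R (A (s + t0) + A (s - t0)) + (1/2) *\<^sub>R (\<beta> (s + t0) - \<beta> (s - t0))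
        = (1/2) *\<^sub>R G s"
      unfolding G_def a_def b_def A_def by (simp add: algebra_simps)
    ultimately show ?thesis unfolding gam_eq by simp
  qed
  have vdg: "vector_derivative (gam \<alpha> \<beta> t0) (at s) = (1/2) *\<^sub>R G s" for s
    using dgam by (rule vector_derivative_at)
  have G0: "G s0 = 0" using crit vdg[of s0] by simp
  have ut: "unit_tangent \<alpha> \<beta> t0 s = (1 / norm (G s)) *\<^sub>R G s" for s
    unfolding unit_tangent_def Let_def vdg normalize_scale[of "1/2" "G s", simplified] by simp
  define p where "p = s0 + t0"
  have bq: "b (s0 - t0) = - a p" using G0 unfolding G_def p_def by (simp add: add_eq_0_iff)
  define v where "v = (\<zeta> p - \<eta> (s0 - t0)) *\<^sub>R perp (a p)"
  have dG: "(G has_vector_derivative v) (at s0)"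
  proof -
    have "(G has_vector_derivative \<zeta> p *\<^sub>R perp (a p) + \<eta> (s0 - t0) *\<^sub>R perp (b (s0 - t0))) (at s0)"
      unfolding G_def p_def by (rule has_vector_derivative_add[OF shift_deriv[OF da] shift_deriv'[OF dbb]])
    then show ?thesis unfolding v_def bq perp_minus by (simp add: algebra_simps)
  qed
  have "(norm (a p))\<^sup>2 = (norm (A p))\<^sup>2 + (norm (\<beta> p))\<^sup>2"
  proof -
    have i: "inner (A p) (\<beta> p) = 0" using orth[rule_format, of p] unfolding A_def by (simp only: inner_commute)
    have "orthogonal (A p) (\<beta> p)" using i by (simp add: orthogonal_def)
    from norm_add_Pythagorean[OF this] show ?thesis unfolding a_def A_def by simp
  qed
  then have "(norm (a p))\<^sup>2 = 1" using unit unfolding A_def by simp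
  then have ap: "a p \<noteq> 0" by (metis norm_zero power_zero_numeral zero_neq_one)
  have vnz: "v \<noteq> 0" using neq ap unfolding v_def by (simp add: perp_zero p_def)
  define h where "h = (\<lambda>y. (1 / (y - s0)) *\<^sub>R G y)"
  have lim0: "((\<lambda>y. (1 / norm (y - s0)) *\<^sub>R (G y - (G s0 + (y - s0) *\<^sub>R v))) \<longlongrightarrow> 0) (at s0)"
    using dG unfolding has_vector_derivative_def has_derivative_within by simp
  have "((\<lambda>y. h y - v) \<longlongrightarrow> 0) (at s0)"
  proof -
    have "((\<lambda>y. norm ((1 / norm (y - s0)) *\<^sub>R (G y - (G s0 + (y - s0) *\<^sub>R v)))) \<longlongrightarrow> 0) (at s0)"
      using lim0 by (rule tendsto_norm_zero)
    moreover have "\<forall>\<^sub>F y in at s0. norm ((1 / norm (y - s0)) *\<^sub>R (G y - (G s0 + (y - s0) *\<^sub>R v)))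
        = norm (h y - v)"
    proof (rule eventually_at_filter[THEN iffD2], rule always_eventually, intro allI impI)
      fix y assume "y \<noteq> s0"
      then have "h y - v = (1 / (y - s0)) *\<^sub>R (G y - (y - s0) *\<^sub>R v)"
        unfolding h_def by (simp add: scaleR_diff_right)
      moreover have "\<bar>1 / norm (y - s0)\<bar> = \<bar>1 / (y - s0)\<bar>" by simp
      ultimately show "norm ((1 / norm (y - s0)) *\<^sub>R (G y - (G s0 + (y - s0) *\<^sub>R v))) = norm (h y - v)"
        by (simp only: G0 add_0_left norm_scaleR)
    qed
    ultimately have "((\<lambda>y. norm (h y - v)) \<longlongrightarrow> 0) (at s0)"
      by (rule Lim_transform_eventually)
    then show ?thesis by (rule tendsto_norm_zero_cancel)
  qed
  then have hv: "(h \<longlongrightarrow> v) (at s0)" by (rule LIM_zero_cancel)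
  have kl: "((\<lambda>y. (1 / norm (h y)) *\<^sub>R h y) \<longlongrightarrow> (1 / norm v) *\<^sub>R v) (at s0)"
    using vnz by (intro tendsto_scaleR[OF tendsto_divide[OF tendsto_const tendsto_norm[OF hv]] hv]) auto
  have right: "(unit_tangent \<alpha> \<beta> t0 \<longlongrightarrow> (1 / norm v) *\<^sub>R v) (at_right s0)"
  proof -
    have "((\<lambda>y. (1 / norm (h y)) *\<^sub>R h y) \<longlongrightarrow> (1 / norm v) *\<^sub>R v) (at_right s0)"
      using kl by (rule tendsto_within_subset) auto
    moreover have "\<forall>\<^sub>F y in at_right s0. (1 / norm (h y)) *\<^sub>R h y = unit_tangent \<alpha> \<beta> t0 y"
    proof (rule eventually_at_filter[THEN iffD2], rule always_eventually, intro allI impI)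
      fix y assume "y \<noteq> s0" "y \<in> {s0<..}"
      then have d: "y - s0 > 0" by auto
      have c: "1 / (y - s0) \<noteq> 0" and sg: "sgn (1 / (y - s0)) = 1" using d by auto
      show "(1 / norm (h y)) *\<^sub>R h y = unit_tangent \<alpha> \<beta> t0 y"
        by (simp only: ut h_def normalize_scale[OF c] sg scaleR_one)
    qed
    ultimately show ?thesis by (rule Lim_transform_eventually)
  qed
  have left: "(unit_tangent \<alpha> \<beta> t0 \<longlongrightarrow> - ((1 / norm v) *\<^sub>R v)) (at_left s0)"
  proof -
    have "((\<lambda>y. - ((1 / norm (h y)) *\<^sub>R h y)) \<longlongrightarrow> - ((1 / norm v) *\<^sub>R v)) (at_left s0)"
      using kl by (intro tendsto_minus, rule tendsto_within_subset) auto
    moreover have "\<forall>\<^sub>F y in at_left s0. - ((1 / norm (h y)) *\<^sub>R h y) = unit_tangent \<alpha> \<beta> t0 y"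
    proof (rule eventually_at_filter[THEN iffD2], rule always_eventually, intro allI impI)
      fix y assume "y \<noteq> s0" "y \<in> {..<s0}"
      then have d: "y - s0 < 0" by auto
      have c: "1 / (y - s0) \<noteq> 0" and sg: "sgn (1 / (y - s0)) = -1" using d by auto
      show "- ((1 / norm (h y)) *\<^sub>R h y) = unit_tangent \<alpha> \<beta> t0 y"
        by (simp only: ut h_def normalize_scale[OF c] sg scaleR_minus1_left minus_minus)
    qed
    ultimately show ?thesis by (rule Lim_transform_eventually)
  qed
  have "norm ((1 / norm v) *\<^sub>R v) = 1" using vnz by simp
  then show ?thesis using right left by blast
qed

end
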